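(* Let $n$ be a positive integer with $n\mid (q-1)$, and let $C$ be a cyclic code of length $n$ over $\mathbb{F}_q$ with complete defining set $Z\subseteq R_n$. Suppose $\ell$ is a divisor of $n$ such that $Z$ contains a coset $\beta G$ (with $\beta\in R_n$) of the subgroup $G$ of $R_n$ of order $\ell$, and $R_n\setminus Z$ contains a consecutive set of length $\frac{n}{\ell}-1$. Then the minimum distance of the dual code $C^{\perp}$ is exactly $\frac{n}{\ell}$.
   Context: Let $q$ be a prime power and $n\mid(q-1)$, so that the set $R_n$ of all $n$-th roots of unity is contained in $\mathbb{F}_q$ and is a cyclic group of order $n$; let $\alpha$ be a generator. For any $Z\subseteq R_n$, the cyclic code of length $n$ over $\mathbb{F}_q$ with complete defining set $Z$ is the ideal generated by $\prod_{\beta\in Z}(x-\beta)$ in $\mathbb{F}_q[x]/(x^n-1)$, identified with a subspace of $\mathbb{F}_q^n$ via coefficient vectors. A subset $\Omega\subseteq R_n$ is a consecutive set of length $\ell'$ if there exist a primitive $n$-th root of unity $\beta$ and an integer $i$ with $\Omega=\{\beta^i,\beta^{i+1},\dots,\beta^{i+\ell'-1}\}$. *)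

theory Defs
  imports "HOL-Computational_Algebra.Polynomial"
begin

text \<open>Vectors of length n over a field are represented as functions nat \<Rightarrow> 'a
  vanishing outside {0..<n}; a polynomial of degree < n corresponds to its
  coefficient function.\<close>

definition roots_of_unity :: "nat \<Rightarrow> 'a::field set" where
  "roots_of_unity n = {x. x ^ n = 1}"

definition xn_minus_1 :: "nat \<Rightarrow> 'a::field poly" where
  "xn_minus_1 n = monom 1 n - 1"

definition gen_poly :: "'a::field set \<Rightarrow> 'a poly" where
  "gen_poly Z = (\<Prod>\<beta>\<in>Z. [:-\<beta>, 1:])"

definition cyclic_code :: "nat \<Rightarrow> 'a::field set \<Rightarrow> (nat \<Rightarrow> 'a) set" where
  "cyclic_code n Z = {coeff ((f * gen_poly Z) mod xn_minus_1 n) | f. True}"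

definition dual_code :: "nat \<Rightarrow> (nat \<Rightarrow> 'a::field) set \<Rightarrow> (nat \<Rightarrow> 'a) set" where
  "dual_code n C = {v. (\<forall>i\<ge>n. v i = 0) \<and> (\<forall>c\<in>C. (\<Sum>i<n. v i * c i) = 0)}"

definition hamming_dist :: "nat \<Rightarrow> (nat \<Rightarrow> 'a) \<Rightarrow> (nat \<Rightarrow> 'a) \<Rightarrow> nat" where
  "hamming_dist n u v = card {i. i < n \<and> u i \<noteq> v i}"

definition min_distance :: "nat \<Rightarrow> (nat \<Rightarrow> 'a) set \<Rightarrow> nat" where
  "min_distance n C = Inf {hamming_dist n u v | u v. u \<in> C \<and> v \<in> C \<and> u \<noteq> v}"

definition primitive_root :: "nat \<Rightarrow> 'a::field \<Rightarrow> bool" where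
  "primitive_root n \<beta> \<longleftrightarrow> \<beta> ^ n = 1 \<and> (\<forall>k. 0 < k \<and> k < n \<longrightarrow> \<beta> ^ k \<noteq> 1)"

definition consecutive_set :: "nat \<Rightarrow> nat \<Rightarrow> 'a::field set \<Rightarrow> bool" where
  "consecutive_set n L \<Omega> \<longleftrightarrow>
     (\<exists>\<beta> (i::int). primitive_root n \<beta> \<and> \<Omega> = (\<lambda>j. \<beta> powi (i + int j)) ` {..<L})"

definition is_subgroup :: "'a::field set \<Rightarrow> 'a set \<Rightarrow> bool" where
  "is_subgroup G H \<longleftrightarrow> G \<subseteq> H \<and> 1 \<in> G \<and> (\<forall>x\<in>G. \<forall>y\<in>G. x * y \<in> G) \<and> (\<forall>x\<in>G. inverse x \<in> G)"

end

theory Submission imports Defs begin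

lemma of_nat_card_UNIV: "of_nat (card (UNIV :: 'a::{finite,field} set)) = (0::'a)"
proof -
  have "(\<Sum>y\<in>(UNIV::'a set). y) = (\<Sum>y\<in>UNIV. y + 1)"
  proof -
    have b: "bij (\<lambda>y::'a. y + 1)" by (rule bij_betw_byWitness[where f'="\<lambda>y. y - 1"]) auto
    show ?thesis using sum.reindex_bij_betw[OF b, of id] by simp
  qed
  also have "\<dots> = (\<Sum>y\<in>UNIV. y) + of_nat (card (UNIV :: 'a set))"
    by (simp add: sum.distrib)
  finally show ?thesis by simp
qed

lemma poly_sum_lt: fixes p :: "'a::comm_semiring_1 poly" shows "degree p < n \<Longrightarrow> poly p x = (\<Sum>i<n. coeff p i * x ^ i)"
proof -
  assume d: "degree p < n"
  have "(\<Sum>i\<le>degree p. coeff p i * x ^ i) = (\<Sum>i<n. coeff p i * x ^ i)"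
    by (rule sum.mono_neutral_left) (use d in \<open>auto simp: coeff_eq_0\<close>)
  thus ?thesis using poly_altdef[of p x] by simp
qed

lemma prod_lin_dvd:
  fixes h :: "'a::field poly"
  assumes "finite Z" "\<forall>z\<in>Z. poly h z = 0"
  shows "(\<Prod>z\<in>Z. [:-z, 1:]) dvd h"
  using assms
proof (induction Z rule: finite_induct)
  case empty then show ?case by simp
next
  case (insert d F)
  then obtain k where k: "h = (\<Prod>z\<in>F. [:-z, 1:]) * k" by (auto elim: dvdE)
  have "poly h d = 0" using insert by auto
  hence "(\<Prod>z\<in>F. (d - z)) * poly k d = 0" using k by (simp add: poly_prod)
  moreover have "(\<Prod>z\<in>F. (d - z)) \<noteq> 0" using insert by (simp add: prod_zero_iff)
  ultimately have "poly k d = 0" by simp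
  then obtain k' where k': "k = [:-d,1:] * k'" by (auto simp: poly_eq_0_iff_dvd elim: dvdE)
  have "h = (\<Prod>z\<in>F. [:-z, 1:]) * ([:-d,1:] * k')" using k k' by (simp only:)
  also have "\<dots> = (\<Prod>z\<in>insert d F. [:-z, 1:]) * k'" by (simp only: prod.insert[OF insert(1,2)] mult_ac)
  finally have "h = (\<Prod>z\<in>insert d F. [:-z, 1:]) * k'" .
  thus ?case by (rule dvdI)
qed

lemma subgroup_facts:
  fixes G :: "'a::{finite,field} set"
  assumes G: "1 \<in> G" "\<forall>x\<in>G. \<forall>y\<in>G. x * y \<in> G" "0 \<notin> G"
  shows "\<And>z. z \<in> G \<Longrightarrow> (\<lambda>g. z * g) ` G = G"
proof -
  fix z assume z: "z \<in> G"
  have "z \<noteq> 0" using z G by auto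
  have "inj_on (\<lambda>g. z * g) G" using \<open>z\<noteq>0\<close> by (auto simp: inj_on_def)
  moreover have sub: "(\<lambda>g. z * g) ` G \<subseteq> G" using z G by auto
  ultimately show "(\<lambda>g. z * g) ` G = G"
    by (metis card_image card_subset_eq finite)
qed

lemma subgroup_pow_card:
  fixes G :: "'a::{finite,field} set"
  assumes G: "1 \<in> G" "\<forall>x\<in>G. \<forall>y\<in>G. x * y \<in> G" "0 \<notin> G" and z: "z \<in> G"
  shows "z ^ card G = 1"
proof -
  have im: "(\<lambda>g. z * g) ` G = G" using subgroup_facts[OF G z] .
  have inj: "inj_on (\<lambda>g. z * g) G" using z G by (auto simp: inj_on_def)
  have "prod id G = prod id ((\<lambda>g. z * g) ` G)" using im by simp
  also have "\<dots> = prod (\<lambda>g. z * g) G" using prod.reindex[OF inj] by simp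
  also have "\<dots> = z ^ card G * prod id G" by (simp add: prod.distrib)
  finally have "1 * prod id G = z ^ card G * prod id G" by simp
  moreover have "prod id G \<noteq> 0" using G by (simp add: prod_zero_iff)
  ultimately show ?thesis by (metis mult_right_cancel)
qed

lemma subgroup_charsum:
  fixes G :: "'a::{finite,field} set"
  assumes G: "1 \<in> G" "\<forall>x\<in>G. \<forall>y\<in>G. x * y \<in> G" "0 \<notin> G"
  shows "(\<Sum>z\<in>G. z ^ i) = (if card G dvd i then of_nat (card G) else 0)"
proof (cases "card G dvd i")
  case True
  then obtain t where "i = card G * t" by auto
  hence "\<forall>z\<in>G. z ^ i = 1" using subgroup_pow_card[OF G] by (simp add: power_mult)
  then show ?thesis using True by simp
next
  case False
  define r where "r = i mod card G"
  have cpos: "card G > 0" using G by (auto simp: card_gt_0_iff)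
  have r: "0 < r" "r < card G" using False cpos by (auto simp: r_def mod_greater_zero_iff_not_dvd)
  have zi: "z ^ i = z ^ r" if "z \<in> G" for z
  proof -
    have "i = card G * (i div card G) + r" by (simp add: r_def)
    hence "z ^ i = (z ^ card G) ^ (i div card G) * z ^ r" by (metis power_add power_mult)
    thus ?thesis using subgroup_pow_card[OF G that] by simp
  qed
  have "\<exists>z0\<in>G. z0 ^ i \<noteq> 1"
  proof (rule ccontr)
    assume "\<not> ?thesis"
    hence "G \<subseteq> {x. poly ([:-1:] + monom 1 r) x = 0}" using zi by (auto simp: poly_monom)
    moreover have p0: "[:-1:] + monom 1 r \<noteq> (0::'a poly)"
    proof
      assume "[:-1:] + monom 1 r = (0::'a poly)"
      hence "coeff ([:-1:] + monom 1 r) r = (0::'a)" by simp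
      moreover have "coeff ([:-1:] + monom 1 r) r = (1::'a)" using r by (cases r) auto
      ultimately show False by simp
    qed
    ultimately have "card G \<le> card {x. poly ([:-1:] + monom 1 r) x = (0::'a)}"
      by (intro card_mono poly_roots_finite) auto
    also have "\<dots> \<le> degree ([:-1:] + monom 1 r :: 'a poly)"
      using p0 by (rule card_poly_roots_bound)
    also have "\<dots> \<le> r" by (metis degree_add_le degree_monom_le degree_pCons_0 le0)
    finally show False using r by simp
  qed
  then obtain z0 where z0: "z0 \<in> G" "z0 ^ i \<noteq> 1" by auto
  have inj: "inj_on (\<lambda>g. z0 * g) G" using z0 G by (auto simp: inj_on_def)
  have "(\<Sum>z\<in>G. z ^ i) = (\<Sum>z\<in>(\<lambda>g. z0 * g) ` G. z ^ i)" using subgroup_facts[OF G z0(1)] by simp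
  also have "\<dots> = (\<Sum>z\<in>G. (z0 * z) ^ i)" using sum.reindex[OF inj] by simp
  also have "\<dots> = z0 ^ i * (\<Sum>z\<in>G. z ^ i)" by (simp add: power_mult_distrib sum_distrib_left)
  finally have "(z0 ^ i - 1) * (\<Sum>z\<in>G. z ^ i) = 0" by (simp add: algebra_simps)
  then show ?thesis using z0 False by simp
qed

lemma xn_facts:
  assumes "0 < n"
  shows "degree (xn_minus_1 n :: 'a::field poly) = n" "poly (xn_minus_1 n) (x::'a) = x ^ n - 1"
    "xn_minus_1 n \<noteq> (0::'a poly)"
proof -
  have e: "xn_minus_1 n = monom (1::'a) n + [:-1:]" by (simp add: xn_minus_1_def one_pCons)
  show d: "degree (xn_minus_1 n :: 'a poly) = n" unfolding e
    using assms by (subst degree_add_eq_left) (auto simp: degree_monom_eq)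
  show "poly (xn_minus_1 n) (x::'a) = x ^ n - 1" by (simp add: e poly_monom)
  show "xn_minus_1 n \<noteq> (0::'a poly)" using d assms by auto
qed

lemma roots_nz: "0 < n \<Longrightarrow> x \<in> roots_of_unity n \<Longrightarrow> x \<noteq> 0"
  by (auto simp: roots_of_unity_def power_0_left)

lemma dual_vanish:
  fixes Z :: "'a::{finite,field} set"
  assumes n: "0 < n" and Z: "Z \<subseteq> roots_of_unity n"
    and g: "\<gamma> \<in> roots_of_unity n" "\<gamma> \<notin> Z"
    and w: "w \<in> dual_code n (cyclic_code n Z)"
  shows "(\<Sum>i<n. w i * inverse \<gamma> ^ i) = 0"
proof -
  define h where "h = (\<Sum>i<n. monom (inverse \<gamma> ^ i) i)"
  have ch: "coeff h k = (if k < n then inverse \<gamma> ^ k else 0)" for k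
    by (simp add: h_def coeff_sum coeff_monom)
  have dh: "degree h < n"
  proof -
    have "degree h \<le> n - 1" by (rule degree_le) (use n in \<open>auto simp: ch\<close>)
    thus ?thesis using n by simp
  qed
  have ph: "poly h x = (\<Sum>i<n. inverse \<gamma> ^ i * x ^ i)" for x
    using poly_sum_lt[OF dh] by (simp add: ch)
  have gnz: "\<gamma> \<noteq> 0" using roots_nz[OF n g(1)] .
  have roots: "\<forall>\<delta>\<in>Z. poly h \<delta> = 0"
  proof
    fix \<delta> assume d: "\<delta> \<in> Z"
    define r where "r = \<delta> * inverse \<gamma>"
    have "\<delta> ^ n = 1" "\<gamma> ^ n = 1" using d Z g by (auto simp: roots_of_unity_def)
    hence rn: "r ^ n = 1" by (simp add: r_def power_mult_distrib power_inverse)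
    have r1: "r \<noteq> 1" using d g gnz by (auto simp: r_def field_simps)
    have "poly h \<delta> = (\<Sum>i<n. r ^ i)" by (simp add: ph r_def power_mult_distrib mult.commute)
    also have "\<dots> = 0" using r1 rn by (simp add: sum_gp_strict)
    finally show "poly h \<delta> = 0" .
  qed
  have "gen_poly Z dvd h" unfolding gen_poly_def by (rule prod_lin_dvd) (use roots in auto)
  then obtain f where f: "h = gen_poly Z * f" by (elim dvdE)
  have "h mod xn_minus_1 n = h" by (intro mod_poly_less) (simp add: xn_facts(1)[OF n] dh)
  hence "coeff h \<in> cyclic_code n Z" unfolding cyclic_code_def using f
    by (metis (mono_tags, lifting) mem_Collect_eq mult.commute)
  hence "(\<Sum>i<n. w i * coeff h i) = 0" using w by (auto simp: dual_code_def)
  thus ?thesis by (simp add: ch)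
qed

lemma cyclic_code_poly:
  fixes Z :: "'a::{finite,field} set"
  assumes n: "0 < n" and Z: "Z \<subseteq> roots_of_unity n" and c: "c \<in> cyclic_code n Z"
  shows "\<exists>h. c = coeff h \<and> (\<forall>x. poly h x = (\<Sum>i<n. coeff h i * x ^ i))
            \<and> (\<forall>z\<in>Z. poly h z = 0)"
proof -
  obtain f where cf: "c = coeff ((f * gen_poly Z) mod xn_minus_1 n)" using c by (auto simp: cyclic_code_def)
  define X where "X = (xn_minus_1 n :: 'a poly)"
  define h where "h = (f * gen_poly Z) mod X"
  have Xnz: "X \<noteq> 0" using xn_facts[OF n] by (simp add: X_def)
  have ps: "poly h x = (\<Sum>i<n. coeff h i * x ^ i)" for x
  proof (cases "h = 0")
    case True then show ?thesis by simp
  next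
    case False
    hence "degree h < n" using degree_mod_less[OF Xnz, of "f * gen_poly Z"] xn_facts(1)[OF n, where 'a='a]
      by (simp add: h_def X_def)
    thus ?thesis by (rule poly_sum_lt)
  qed
  have rz: "poly h z = 0" if z: "z \<in> Z" for z
  proof -
    have "poly (gen_poly Z) z = 0" unfolding gen_poly_def using z by (auto simp: poly_prod)
    moreover have "poly X z = 0" using z Z by (auto simp: X_def xn_facts(2)[OF n] roots_of_unity_def)
    moreover have "h = f * gen_poly Z - (f * gen_poly Z) div X * X" unfolding h_def
      by (simp add: mod_div_mult_eq[symmetric] algebra_simps)
    ultimately show ?thesis by simp
  qed
  show ?thesis using cf ps rz by (auto simp: h_def X_def)
qed

lemma dual_vec:
  fixes Z :: "'a::{finite,field} set"
  assumes n: "0 < n" and Z: "Z \<subseteq> roots_of_unity n"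
    and G: "is_subgroup G (roots_of_unity n)" and l: "card G = l"
    and b: "\<beta> \<in> roots_of_unity n" and bG: "(\<lambda>g. \<beta> * g) ` G \<subseteq> Z"
    and lnz: "(of_nat l :: 'a) \<noteq> 0"
  shows "(\<lambda>i. if i < n \<and> l dvd i then \<beta> ^ i else 0) \<in> dual_code n (cyclic_code n Z)"
  unfolding dual_code_def
proof (intro CollectI conjI allI impI ballI)
  fix c assume c: "c \<in> cyclic_code n Z"
  obtain h where h: "c = coeff h" "\<And>x. poly h x = (\<Sum>i<n. coeff h i * x ^ i)" "\<And>z. z\<in>Z \<Longrightarrow> poly h z = 0"
    using cyclic_code_poly[OF n Z c] by blast
  have G1: "1 \<in> G" "\<forall>x\<in>G. \<forall>y\<in>G. x * y \<in> G" "0 \<notin> G"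
    using G roots_nz[OF n] by (auto simp: is_subgroup_def)
  have "0 = (\<Sum>\<zeta>\<in>G. poly h (\<beta> * \<zeta>))" by (intro sum.neutral[symmetric] ballI) (use h(3) bG in auto)
  also have "\<dots> = (\<Sum>\<zeta>\<in>G. \<Sum>i<n. coeff h i * \<beta> ^ i * \<zeta> ^ i)"
    by (simp add: h(2) power_mult_distrib mult.assoc)
  also have "\<dots> = (\<Sum>i<n. coeff h i * \<beta> ^ i * (\<Sum>\<zeta>\<in>G. \<zeta> ^ i))"
    by (subst sum.swap) (simp add: sum_distrib_left)
  also have "\<dots> = (\<Sum>i<n. coeff h i * \<beta> ^ i * (if l dvd i then of_nat l else 0))"
    using subgroup_charsum[OF G1, unfolded l] by simp
  also have "\<dots> = of_nat l * (\<Sum>i<n. (if i < n \<and> l dvd i then \<beta> ^ i else 0) * c i)"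
    by (simp add: sum_distrib_left h(1) if_distrib cong: if_cong) (rule sum.cong; simp)
  finally show "(\<Sum>i<n. (if i < n \<and> l dvd i then \<beta> ^ i else 0) * c i) = 0" using lnz by simp
qed simp

lemma prim_inj:
  assumes b: "primitive_root n (b::'a::field)" and "a < n" "c < n" "b ^ a = b ^ c"
  shows "a = c"
proof (rule ccontr)
  assume ne: "a \<noteq> c"
  have bnz: "b \<noteq> 0" using b assms(2) by (auto simp: primitive_root_def power_0_left)
  have *: "b ^ (d - e) = 1" if "e < d" "d < n" "b ^ e = b ^ d" for d e
  proof -
    have "b ^ d = b ^ (e + (d - e))" using that by simp
    hence "b ^ d = b ^ e * b ^ (d - e)" by (simp only: power_add)
    thus ?thesis using that bnz by simp
  qed
  show False
  proof (cases "a < c")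
    case True
    thus False using *[of a c] assms b by (auto simp: primitive_root_def)
  next
    case False
    hence "c < a" using ne by simp
    thus False using *[of c a] assms b by (auto simp: primitive_root_def)
  qed
qed

lemma weight_lb:
  fixes Z :: "'a::{finite,field} set"
  assumes n: "0 < n" and Z: "Z \<subseteq> roots_of_unity n"
    and cs: "consecutive_set n m \<Omega>" and Om: "\<Omega> \<subseteq> roots_of_unity n - Z"
    and w: "w \<in> dual_code n (cyclic_code n Z)" and i0: "i0 < n" "w i0 \<noteq> 0"
  shows "m < card {i. i < n \<and> w i \<noteq> 0}"
proof (rule ccontr)
  assume "\<not> ?thesis"
  hence cm: "card {i. i < n \<and> w i \<noteq> 0} \<le> m" by simp
  obtain b s where b: "primitive_root n b" and Omd: "\<Omega> = (\<lambda>j. b powi (s + int j)) ` {..<m}"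
    using cs by (auto simp: consecutive_set_def)
  have bnz: "b \<noteq> 0" using b n by (auto simp: primitive_root_def power_0_left)
  define y where "y = inverse b"
  define t where "t = inverse (b powi s)"
  have tnz: "t \<noteq> 0" using bnz by (simp add: t_def)
  have ydist: "y ^ a \<noteq> y ^ c" if "a < n" "c < n" "a \<noteq> c" for a c
    using prim_inj[OF b, of a c] that by (auto simp: y_def power_inverse)
  define u where "u i = w i * t ^ i" for i
  have van: "(\<Sum>i<n. u i * (y ^ i) ^ j) = 0" if j: "j < m" for j
  proof -
    have "b powi (s + int j) \<in> \<Omega>" using j by (auto simp: Omd)
    hence "(\<Sum>i<n. w i * inverse (b powi (s + int j)) ^ i) = 0"
      using Om by (intro dual_vanish[OF n Z _ _ w]) auto
    moreover have "inverse (b powi (s + int j)) = t * y ^ j"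
      using bnz by (simp add: power_int_add t_def y_def power_inverse)
    ultimately show ?thesis
      by (simp add: u_def power_mult_distrib power_mult[symmetric] mult_ac)
  qed
  define S where "S = {i. i < n \<and> w i \<noteq> 0} - {i0}"
  have finS: "finite S" by (simp add: S_def)
  have cS: "card S < m"
  proof -
    have "card S = card {i. i < n \<and> w i \<noteq> 0} - 1" using i0 by (simp add: S_def)
    moreover have "card {i. i < n \<and> w i \<noteq> 0} \<ge> 1"
    proof -
      have "i0 \<in> {i. i < n \<and> w i \<noteq> 0}" using i0 by simp
      moreover have "finite {i. i < n \<and> w i \<noteq> 0}" by simp
      ultimately have "card {i. i < n \<and> w i \<noteq> 0} > 0" by (auto simp: card_gt_0_iff)
      thus ?thesis by simp
    qed
    ultimately show ?thesis using cm by linarith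
  qed
  define P where "P = (\<Prod>i\<in>S. [:-(y ^ i), 1:])"
  have dP: "degree P < m"
  proof -
    have "degree P \<le> sum (degree \<circ> (\<lambda>i. [:-(y ^ i), 1:])) S" unfolding P_def
      by (rule degree_prod_sum_le[OF finS])
    also have "\<dots> = card S" by simp
    finally show ?thesis using cS by linarith
  qed
  have "(\<Sum>i<n. u i * poly P (y ^ i)) = (\<Sum>i<n. u i * (\<Sum>j<m. coeff P j * (y ^ i) ^ j))"
    by (simp add: poly_sum_lt[OF dP])
  also have "\<dots> = (\<Sum>j<m. coeff P j * (\<Sum>i<n. u i * (y ^ i) ^ j))"
    by (simp add: sum_distrib_left sum_distrib_right mult_ac) (rule sum.swap)
  also have "\<dots> = 0" using van by simp
  finally have z: "(\<Sum>i<n. u i * poly P (y ^ i)) = 0" .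
  have "(\<Sum>i<n. u i * poly P (y ^ i)) = u i0 * poly P (y ^ i0) + (\<Sum>i\<in>{..<n} - {i0}. u i * poly P (y ^ i))"
    using i0 by (simp add: sum.remove)
  also have "(\<Sum>i\<in>{..<n} - {i0}. u i * poly P (y ^ i)) = 0"
  proof (intro sum.neutral ballI)
    fix i assume i: "i \<in> {..<n} - {i0}"
    show "u i * poly P (y ^ i) = 0"
    proof (cases "w i = 0")
      case True then show ?thesis by (simp add: u_def)
    next
      case False
      hence "i \<in> S" using i by (auto simp: S_def)
      hence "poly P (y ^ i) = 0" unfolding P_def using finS by (auto simp: poly_prod)
      thus ?thesis by simp
    qed
  qed
  finally have "u i0 * poly P (y ^ i0) = 0" using z by simp
  moreover have "u i0 \<noteq> 0" using i0 tnz by (simp add: u_def)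
  moreover have "poly P (y ^ i0) \<noteq> 0" unfolding P_def using finS
    by (auto simp: poly_prod S_def dest!: ydist[OF i0(1)])
  ultimately show False by simp
qed

lemma card_mult_set:
  assumes "0 < l" "l dvd n"
  shows "card {i::nat. i < n \<and> l dvd i} = n div l"
proof -
  obtain t where t: "n = l * t" using assms by auto
  have "{i. i < n \<and> l dvd i} = (\<lambda>k. l * k) ` {..<t}"
    using assms(1) by (auto simp: t)
  moreover have "inj_on (\<lambda>k. l * k) {..<t}" using assms(1) by (auto simp: inj_on_def)
  ultimately show ?thesis using assms(1) by (simp add: card_image t)
qed

theorem proposition2p8:
  fixes n l :: nat and Z :: "'a::{finite,field} set"
  assumes "0 < n" and "n dvd card (UNIV :: 'a set) - 1"
    and "Z \<subseteq> roots_of_unity n"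
    and "l dvd n"
    and "\<exists>G \<beta>. is_subgroup G (roots_of_unity n) \<and> card G = l \<and>
               \<beta> \<in> roots_of_unity n \<and> (\<lambda>g. \<beta> * g) ` G \<subseteq> Z"
    and "\<exists>\<Omega>. \<Omega> \<subseteq> roots_of_unity n - Z \<and> consecutive_set n (n div l - 1) \<Omega>"
  shows "min_distance n (dual_code n (cyclic_code n Z)) = n div l"
proof -
  note n = assms(1) and Z = assms(3)
  obtain G \<beta> where G: "is_subgroup G (roots_of_unity n)" "card G = l"
    "\<beta> \<in> roots_of_unity n" "(\<lambda>g. \<beta> * g) ` G \<subseteq> Z" using assms(5) by blast
  obtain \<Omega> where Om: "\<Omega> \<subseteq> roots_of_unity n - Z" "consecutive_set n (n div l - 1) \<Omega>"
    using assms(6) by blast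
  have lpos: "0 < l" using assms(1,4) by (auto intro!: Nat.gr0I)
  have lnz: "(of_nat l :: 'a) \<noteq> 0"
  proof
    assume l0: "(of_nat l :: 'a) = 0"
    obtain t where t: "card (UNIV :: 'a set) - 1 = n * t" using assms(2) by auto
    obtain k where k: "n = l * k" using assms(4) by auto
    have c1: "card (UNIV :: 'a set) \<ge> 1"
      using card_gt_0_iff[of "UNIV :: 'a set"] by simp
    have "(of_nat (card (UNIV :: 'a set)) :: 'a) = of_nat (card (UNIV :: 'a set) - 1) + 1"
      using c1 by (simp add: of_nat_diff)
    also have "of_nat (card (UNIV :: 'a set) - 1) = (of_nat l * of_nat k * of_nat t :: 'a)"
      by (simp only: t k of_nat_mult)
    also have "\<dots> + 1 = 1" using l0 by simp
    finally show False using of_nat_card_UNIV[where 'a='a] by simp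
  qed
  define D where "D = dual_code n (cyclic_code n Z)"
  define v where "v = (\<lambda>i. if i < n \<and> l dvd i then \<beta> ^ i else (0::'a))"
  have vD: "v \<in> D" unfolding v_def D_def by (rule dual_vec[OF n Z G(1,2,3,4) lnz])
  have zD: "(\<lambda>_. 0::'a) \<in> D" by (simp add: D_def dual_code_def)
  have bnz: "\<beta> \<noteq> 0" using roots_nz[OF n G(3)] .
  have hv: "hamming_dist n v (\<lambda>_. 0) = n div l"
    unfolding hamming_dist_def v_def using bnz card_mult_set[OF lpos assms(4)] by simp
  have vnz: "v \<noteq> (\<lambda>_. 0)"
  proof
    assume "v = (\<lambda>_. 0)"
    hence "v 0 = 0" by simp
    thus False using n by (simp add: v_def)
  qed
  have lb: "n div l \<le> x" if x: "x \<in> {hamming_dist n u v | u v. u \<in> D \<and> v \<in> D \<and> u \<noteq> v}" for x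
  proof -
    obtain u u' where uu: "x = hamming_dist n u u'" "u \<in> D" "u' \<in> D" "u \<noteq> u'" using x by blast
    define w where "w = (\<lambda>i. u i - u' i)"
    have wD: "w \<in> dual_code n (cyclic_code n Z)" using uu(2,3)
      by (auto simp: D_def dual_code_def w_def algebra_simps sum_subtractf)
    obtain i0 where i0: "u i0 \<noteq> u' i0" using uu(4) by auto
    have "i0 < n" using i0 uu(2,3) unfolding D_def dual_code_def by (metis (mono_tags, lifting) mem_Collect_eq not_le)
    hence "n div l - 1 < card {i. i < n \<and> w i \<noteq> 0}"
      using i0 by (intro weight_lb[OF n Z Om(2) Om(1) wD]) (auto simp: w_def)
    moreover have "{i. i < n \<and> w i \<noteq> 0} = {i. i < n \<and> u i \<noteq> u' i}" by (auto simp: w_def)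
    ultimately show ?thesis using uu(1) by (simp add: hamming_dist_def)
  qed
  have "Inf {hamming_dist n u v | u v. u \<in> D \<and> v \<in> D \<and> u \<noteq> v} = n div l"
  proof (rule cInf_eq_minimum)
    show "n div l \<in> {hamming_dist n u v | u v. u \<in> D \<and> v \<in> D \<and> u \<noteq> v}"
      using hv vD zD vnz by (metis (mono_tags, lifting) mem_Collect_eq)
  qed (rule lb)
  thus ?thesis by (simp add: min_distance_def D_def)
qed

end
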